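(* Let $k\geq 3$ be an integer and let $G$ be a graph on $n$ vertices with minimum degree $\delta(G)\geq\delta>\frac{(k-1)n}{k}$, with at least two $K_{k+1}$-components, and such that $G[\mathrm{int}_k(G)]$ contains no copy of $K_k$. Let $C_1,\dots,C_p$ be the $K_{k+1}$-components of $G$ and set $q':=k\delta-(k-1)n+\sum_{j\neq 1}|\mathrm{ext}(C_j)|-|\mathrm{ext}(C_1)|$. Then $CK_{k+1}F(G)\geq(k+1)\min\left\{k\delta-(k-1)n,\left\lfloor\frac{|\mathrm{ext}(C_1)|}{2}\right\rfloor,q'\right\}$.
   Context: A $K_{k+1}$-walk in $G$ is a sequence of copies of $K_k$ in which consecutive copies lie in a common copy of $K_{k+1}$; its endpoints are then $K_{k+1}$-connected; the equivalence classes of copies of $K_k$ are the $K_{k+1}$-components. The vertices of a component are the vertices of its copies of $K_k$. $\mathrm{int}_k(G)$ is the set of vertices lying in more than one component; $\mathrm{ext}(C)$ is the set of vertices of $C$ lying in no other component. A $K_{k+1}$-factor is a set of vertex-disjoint copies of $K_{k+1}$; it is connected if all copies of $K_k$ contained in its members lie in one component; its size is the number of covered vertices; $CK_{k+1}F(G)$ is the maximum size of a connected $K_{k+1}$-factor in $G$. *)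

theory Defs
  imports Complex_Main
begin

definition is_graph :: "'a set \<Rightarrow> ('a \<Rightarrow> 'a \<Rightarrow> bool) \<Rightarrow> bool" where
  "is_graph V E \<longleftrightarrow> finite V \<and> (\<forall>x y. E x y \<longrightarrow> x \<in> V \<and> y \<in> V)
     \<and> (\<forall>x y. E x y \<longrightarrow> E y x) \<and> (\<forall>x. \<not> E x x)"

definition degree :: "'a set \<Rightarrow> ('a \<Rightarrow> 'a \<Rightarrow> bool) \<Rightarrow> 'a \<Rightarrow> nat" where
  "degree V E v = card {u \<in> V. E v u}"

definition is_clique :: "('a \<Rightarrow> 'a \<Rightarrow> bool) \<Rightarrow> 'a set \<Rightarrow> bool" where
  "is_clique E S \<longleftrightarrow> (\<forall>x\<in>S. \<forall>y\<in>S. x \<noteq> y \<longrightarrow> E x y)"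

definition kcliques :: "'a set \<Rightarrow> ('a \<Rightarrow> 'a \<Rightarrow> bool) \<Rightarrow> nat \<Rightarrow> 'a set set" where
  "kcliques V E k = {S. S \<subseteq> V \<and> card S = k \<and> is_clique E S}"

definition walk_step :: "'a set \<Rightarrow> ('a \<Rightarrow> 'a \<Rightarrow> bool) \<Rightarrow> nat \<Rightarrow> ('a set \<times> 'a set) set" where
  "walk_step V E k = {(A, B). A \<in> kcliques V E k \<and> B \<in> kcliques V E k \<and>
      (\<exists>T \<in> kcliques V E (Suc k). A \<subseteq> T \<and> B \<subseteq> T)}"

definition kconn :: "'a set \<Rightarrow> ('a \<Rightarrow> 'a \<Rightarrow> bool) \<Rightarrow> nat \<Rightarrow> ('a set \<times> 'a set) set" where
  "kconn V E k = (walk_step V E k)\<^sup>* \<inter> (kcliques V E k \<times> kcliques V E k)"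

definition kcomponents :: "'a set \<Rightarrow> ('a \<Rightarrow> 'a \<Rightarrow> bool) \<Rightarrow> nat \<Rightarrow> 'a set set set" where
  "kcomponents V E k = kcliques V E k // kconn V E k"

definition comp_verts :: "'a set set \<Rightarrow> 'a set" where
  "comp_verts C = \<Union>C"

definition int_k :: "'a set \<Rightarrow> ('a \<Rightarrow> 'a \<Rightarrow> bool) \<Rightarrow> nat \<Rightarrow> 'a set" where
  "int_k V E k = {v \<in> V. 2 \<le> card {C \<in> kcomponents V E k. v \<in> comp_verts C}}"

definition ext :: "'a set \<Rightarrow> ('a \<Rightarrow> 'a \<Rightarrow> bool) \<Rightarrow> nat \<Rightarrow> 'a set set \<Rightarrow> 'a set" where
  "ext V E k C = {v \<in> comp_verts C. \<forall>D \<in> kcomponents V E k. D \<noteq> C \<longrightarrow> v \<notin> comp_verts D}"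

definition is_factor :: "'a set \<Rightarrow> ('a \<Rightarrow> 'a \<Rightarrow> bool) \<Rightarrow> nat \<Rightarrow> 'a set set \<Rightarrow> bool" where
  "is_factor V E k F \<longleftrightarrow> F \<subseteq> kcliques V E (Suc k) \<and>
     (\<forall>T1\<in>F. \<forall>T2\<in>F. T1 \<noteq> T2 \<longrightarrow> T1 \<inter> T2 = {})"

definition is_connected_factor :: "'a set \<Rightarrow> ('a \<Rightarrow> 'a \<Rightarrow> bool) \<Rightarrow> nat \<Rightarrow> 'a set set \<Rightarrow> bool" where
  "is_connected_factor V E k F \<longleftrightarrow> is_factor V E k F \<and>
     (\<forall>A B. (\<exists>T\<in>F. A \<subseteq> T \<and> card A = k) \<longrightarrow> (\<exists>T\<in>F. B \<subseteq> T \<and> card B = k)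
        \<longrightarrow> (A, B) \<in> kconn V E k)"

definition CKF :: "'a set \<Rightarrow> ('a \<Rightarrow> 'a \<Rightarrow> bool) \<Rightarrow> nat \<Rightarrow> nat" where
  "CKF V E k = Max {card (\<Union>F) | F. is_connected_factor V E k F}"

end

theory Submission
  imports Defs
begin

definition NN :: "'a set \<Rightarrow> ('a \<Rightarrow> 'a \<Rightarrow> bool) \<Rightarrow> 'a \<Rightarrow> 'a set" where
  "NN V E v = {u \<in> V. \<not> E v u}"

lemma card_NN:
  assumes "finite V"
  shows "card (NN V E v) + degree V E v = card V"
proof -
  have "V = NN V E v \<union> {u \<in> V. E v u}" "NN V E v \<inter> {u \<in> V. E v u} = {}"
    unfolding NN_def by auto
  then show ?thesis unfolding degree_def
    using card_Un_disjoint[of "NN V E v" "{u \<in> V. E v u}"] assms by (simp add: NN_def)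
qed

lemma grow:
  assumes "finite P" "S0 \<subseteq> P" "is_clique E S0" "card S0 \<le> m"
    and step: "\<And>S. S \<subseteq> P \<Longrightarrow> is_clique E S \<Longrightarrow> S0 \<subseteq> S \<Longrightarrow> card S < m \<Longrightarrow> \<exists>w\<in>P. w \<notin> S \<and> (\<forall>v\<in>S. E v w \<and> E w v)"
  shows "\<exists>S. S0 \<subseteq> S \<and> S \<subseteq> P \<and> is_clique E S \<and> card S = m"
  using assms(4) step
proof (induction m)
  case 0
  then show ?case using assms(1-3) by (metis le_zero_eq order_refl)
next
  case (Suc m)
  show ?case
  proof (cases "card S0 = Suc m")
    case True then show ?thesis using assms(2,3) by blast
  next
    case False
    then have "card S0 \<le> m" using Suc.prems by simp
    with Suc.IH Suc.prems(2) obtain S where S: "S0 \<subseteq> S" "S \<subseteq> P" "is_clique E S" "card S = m"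
      by (metis less_Suc_eq)
    from Suc.prems(2)[OF S(2,3,1)] S(4) obtain w where w: "w \<in> P" "w \<notin> S" "\<forall>v\<in>S. E v w \<and> E w v" by auto
    have fS: "finite S" using S(2) assms(1) finite_subset by auto
    have "is_clique E (insert w S)" using S(3) w(3) unfolding is_clique_def by auto
    moreover have "card (insert w S) = Suc m" using fS w(2) S(4) by simp
    ultimately show ?thesis using S w by (intro exI[of _ "insert w S"]) auto
  qed
qed

lemma count_ext:
  assumes "finite S" "P \<subseteq> V" "\<forall>x. \<not> E x x"
    and "(\<Sum>v\<in>S. card (P \<inter> NN V E v)) < card P"
  shows "\<exists>w\<in>P. w \<notin> S \<and> (\<forall>v\<in>S. E v w)"
proof -
  have "card (\<Union>v\<in>S. P \<inter> NN V E v) < card P"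
    using card_UN_le[OF assms(1), of "\<lambda>v. P \<inter> NN V E v"] assms(4) by linarith
  have "\<not> P \<subseteq> (\<Union>v\<in>S. P \<inter> NN V E v)"
  proof
    assume "P \<subseteq> (\<Union>v\<in>S. P \<inter> NN V E v)"
    then have "P = (\<Union>v\<in>S. P \<inter> NN V E v)" by blast
    then show False using \<open>card (\<Union>v\<in>S. P \<inter> NN V E v) < card P\<close> by simp
  qed
  then obtain w where w: "w \<in> P" "w \<notin> (\<Union>v\<in>S. P \<inter> NN V E v)" by blast
  have "w \<notin> S" using w assms(2,3) unfolding NN_def by auto
  moreover have "\<forall>v\<in>S. E v w" using w assms(2) unfolding NN_def by auto
  ultimately show ?thesis using w by blast
qed

definition is_matching :: "('a \<Rightarrow> 'a \<Rightarrow> bool) \<Rightarrow> 'a set \<Rightarrow> 'a set set \<Rightarrow> bool" where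
  "is_matching E X M \<longleftrightarrow> finite M \<and> (\<forall>e\<in>M. \<exists>a b. e = {a, b} \<and> a \<noteq> b \<and> a \<in> X \<and> b \<in> X \<and> E a b)
     \<and> (\<forall>e1\<in>M. \<forall>e2\<in>M. e1 \<noteq> e2 \<longrightarrow> e1 \<inter> e2 = {})"

lemma matching_card_Union:
  assumes "is_matching E X M"
  shows "card (\<Union>M) = 2 * card M"
proof -
  have "card (\<Union>M) = sum card M"
    apply (rule card_Union_disjoint)
    using assms unfolding is_matching_def pairwise_def disjnt_def by auto
  also have "\<dots> = sum (\<lambda>_. 2) M"
    apply (rule sum.cong) using assms unfolding is_matching_def by auto
  finally show ?thesis by simp
qed

lemma matching_swap:
  assumes M: "is_matching E X M" and e: "{a, b} \<in> M" "a \<noteq> b"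
    and uv: "u \<in> X - \<Union>M" "v \<in> X - \<Union>M" "u \<noteq> v" and adj: "E u b" "E v a"
  shows "\<exists>M'. is_matching E X M' \<and> card M' = Suc (card M)"
proof -
  define M' where "M' = insert {u, b} (insert {v, a} (M - {{a, b}}))"
  have fin: "finite M" and Medge: "\<forall>e\<in>M. \<exists>a b. e = {a, b} \<and> a \<noteq> b \<and> a \<in> X \<and> b \<in> X \<and> E a b"
    and Mdisj: "\<forall>e1\<in>M. \<forall>e2\<in>M. e1 \<noteq> e2 \<longrightarrow> e1 \<inter> e2 = {}"
    using M unfolding is_matching_def by simp_all
  have abX: "a \<in> X \<and> b \<in> X"
  proof -
    obtain a' b' where "{a, b} = {a', b'}" "a' \<in> X" "b' \<in> X"
      using Medge[rule_format, OF e(1)] by auto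
    then show ?thesis by (auto simp: doubleton_eq_iff)
  qed
  have abW: "a \<in> \<Union>M" "b \<in> \<Union>M" using e by auto
  have dis: "a \<notin> f \<and> b \<notin> f" if "f \<in> M" "f \<noteq> {a, b}" for f
  proof -
    show ?thesis using Mdisj[rule_format, OF that(1) e(1) that(2)] by auto
  qed
  have ua: "u \<noteq> a" "u \<noteq> b" "v \<noteq> a" "v \<noteq> b" using uv abW by auto
  have notin1: "{v, a} \<notin> M - {{a, b}}" using uv(2) by auto
  have "{u, b} \<notin> M" using uv(1) by blast
  moreover have "{u, b} \<noteq> {v, a}" using ua uv(3) by (auto simp: doubleton_eq_iff)
  ultimately have notin2: "{u, b} \<notin> insert {v, a} (M - {{a, b}})" by blast
  have "card M' = Suc (Suc (card (M - {{a, b}})))"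
    unfolding M'_def using fin notin1 notin2 by simp
  moreover have "Suc (card (M - {{a, b}})) = card M"
    by (rule card_Suc_Diff1[OF fin e(1)])
  ultimately have c: "card M' = Suc (card M)" by simp
  have edges: "\<forall>e\<in>M'. \<exists>a b. e = {a, b} \<and> a \<noteq> b \<and> a \<in> X \<and> b \<in> X \<and> E a b"
  proof
    fix f assume "f \<in> M'"
    then consider "f = {u, b}" | "f = {v, a}" | "f \<in> M" unfolding M'_def by blast
    then show "\<exists>a b. f = {a, b} \<and> a \<noteq> b \<and> a \<in> X \<and> b \<in> X \<and> E a b"
    proof cases
      case 1 then show ?thesis using ua uv abX adj by blast
    next
      case 2 then show ?thesis using ua uv abX adj by blast
    next
      case 3 then show ?thesis using Medge by blast
    qed
  qed
  have H: "u \<notin> f \<and> v \<notin> f \<and> a \<notin> f \<and> b \<notin> f" if "f \<in> M - {{a, b}}" for f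
    using uv dis that by auto
  have H2: "f \<inter> g = {}" if "f \<in> M - {{a, b}}" "g = {u, b} \<or> g = {v, a}" for f g
    using H[OF that(1)] that(2) by auto
  have H3: "{u, b} \<inter> {v, a} = {}" using ua uv(3) e(2) by auto
  have disj: "f1 \<inter> f2 = {}" if f: "f1 \<in> M'" "f2 \<in> M'" "f1 \<noteq> f2" for f1 f2
  proof -
    have A1: "(f1 = {u, b} \<or> f1 = {v, a}) \<or> f1 \<in> M - {{a, b}}" using f(1) unfolding M'_def by blast
    have A2: "(f2 = {u, b} \<or> f2 = {v, a}) \<or> f2 \<in> M - {{a, b}}" using f(2) unfolding M'_def by blast
    show ?thesis
    proof (cases "f1 \<in> M - {{a, b}}")
      case True
      show ?thesis
      proof (cases "f2 \<in> M - {{a, b}}")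
        case True
        then show ?thesis using Mdisj f(3) \<open>f1 \<in> M - {{a, b}}\<close> by blast
      next
        case False
        then show ?thesis using H2[OF True] A2 by blast
      qed
    next
      case False
      then have B1: "f1 = {u, b} \<or> f1 = {v, a}" using A1 by blast
      show ?thesis
      proof (cases "f2 \<in> M - {{a, b}}")
        case True
        then show ?thesis using H2[OF True B1] by (simp add: Int_commute)
      next
        case False
        then have "f2 = {u, b} \<or> f2 = {v, a}" using A2 by blast
        then show ?thesis using B1 f(3) H3 by (auto simp: Int_commute)
      qed
    qed
  qed
  have "finite M'" unfolding M'_def using fin by simp
  then have "is_matching E X M'"
    unfolding is_matching_def using edges disj by blast
  with c show ?thesis by blast
qed

lemma matching_add:
  assumes M: "is_matching E X M" and pw: "p \<in> X - \<Union>M" "w \<in> X - \<Union>M" "p \<noteq> w" "E p w"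
  shows "is_matching E X (insert {p, w} M) \<and> card (insert {p, w} M) = Suc (card M)"
proof -
  have fin: "finite M" and Medge: "\<forall>e\<in>M. \<exists>a b. e = {a, b} \<and> a \<noteq> b \<and> a \<in> X \<and> b \<in> X \<and> E a b"
    and Mdisj: "\<forall>e1\<in>M. \<forall>e2\<in>M. e1 \<noteq> e2 \<longrightarrow> e1 \<inter> e2 = {}"
    using M unfolding is_matching_def by simp_all
  have nin: "{p, w} \<notin> M" using pw(1) by blast
  have e1: "\<exists>a b. {p, w} = {a, b} \<and> a \<noteq> b \<and> a \<in> X \<and> b \<in> X \<and> E a b" using pw by blast
  have d1: "f \<inter> {p, w} = {}" if "f \<in> M" for f using pw(1,2) that by blast
  have "\<forall>e\<in>insert {p, w} M. \<exists>a b. e = {a, b} \<and> a \<noteq> b \<and> a \<in> X \<and> b \<in> X \<and> E a b"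
    using Medge e1 by blast
  moreover have "\<forall>e1\<in>insert {p, w} M. \<forall>e2\<in>insert {p, w} M. e1 \<noteq> e2 \<longrightarrow> e1 \<inter> e2 = {}"
  proof (intro ballI impI)
    fix e1 e2 assume "e1 \<in> insert {p, w} M" "e2 \<in> insert {p, w} M" "e1 \<noteq> e2"
    then show "e1 \<inter> e2 = {}" using d1 Mdisj by (metis Int_commute insert_iff)
  qed
  moreover have "finite (insert {p, w} M)" using fin by simp
  ultimately have "is_matching E X (insert {p, w} M)" unfolding is_matching_def by blast
  moreover have "card (insert {p, w} M) = Suc (card M)" using fin nin by simp
  ultimately show ?thesis by blast
qed

lemma card_nbr2:
  assumes "a \<noteq> b" "a \<in> X" "b \<in> X"
  shows "card ({y \<in> X. E u y} \<inter> {a, b}) = (if E u a then 1 else 0) + (if E u b then 1 else 0)"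
proof -
  have "{y \<in> X. E u y} \<inter> {a, b} = (if E u a then {a} else {}) \<union> (if E u b then {b} else {})"
    using assms by auto
  then show ?thesis using assms by simp
qed

lemma matching_exists:
  assumes fin: "finite X" and deg: "\<forall>x\<in>X. s \<le> card {y \<in> X. E x y}" and sz: "2 * s \<le> card X"
    and sym: "\<forall>x y. E x y \<longrightarrow> E y x" and irr: "\<forall>x. \<not> E x x"
  shows "\<exists>M. is_matching E X M \<and> card M = s"
proof -
  have "r \<le> s \<Longrightarrow> \<exists>M. is_matching E X M \<and> card M = r" for r
  proof (induction r)
    case 0
    then show ?case by (intro exI[of _ "{}"]) (simp add: is_matching_def)
  next
    case (Suc r)
    then obtain M where M: "is_matching E X M" "card M = r" by auto
    have fM: "finite M" using M unfolding is_matching_def by auto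
    have WX: "\<Union>M \<subseteq> X" using M(1) unfolding is_matching_def by auto
    have cW: "card (\<Union>M) = 2 * r" using matching_card_Union[OF M(1)] M(2) by simp
    have cU: "card (X - \<Union>M) \<ge> 2" using card_Diff_subset[OF finite_subset[OF WX fin] WX] cW sz Suc.prems by simp
    have "X - \<Union>M \<noteq> {}"
    proof
      assume h: "X - \<Union>M = {}"
      have "card (X - \<Union>M) = 0" unfolding h by (rule card.empty)
      then show False using cU by linarith
    qed
    then obtain u where u: "u \<in> X - \<Union>M" by blast
    have "card ((X - \<Union>M) - {u}) \<ge> 1" using cU u fin by simp
    have "(X - \<Union>M) - {u} \<noteq> {}"
    proof
      assume h: "(X - \<Union>M) - {u} = {}"
      have "card ((X - \<Union>M) - {u}) = 0" unfolding h by (rule card.empty)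
      then show False using \<open>card ((X - \<Union>M) - {u}) \<ge> 1\<close> by linarith
    qed
    then obtain v where v: "v \<in> X - \<Union>M" "v \<noteq> u" by blast
    show ?case
    proof (cases "\<exists>p\<in>X - \<Union>M. \<exists>w\<in>X - \<Union>M. E p w")
      case True
      then obtain p w where pw: "p \<in> X - \<Union>M" "w \<in> X - \<Union>M" "E p w" by blast
      have "p \<noteq> w" using pw irr by auto
      then show ?thesis using matching_add[OF M(1) pw(1,2) \<open>p \<noteq> w\<close> pw(3)] M(2) by blast
    next
      case False
      define Nu where "Nu = {y \<in> X. E u y}"
      define Nv where "Nv = {y \<in> X. E v y}"
      have NuW: "Nu \<subseteq> \<Union>M" using False u unfolding Nu_def by blast
      have NvW: "Nv \<subseteq> \<Union>M" using False v unfolding Nv_def by blast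
      have sumN: "card (N \<inter> \<Union>M) = (\<Sum>e\<in>M. card (N \<inter> e))" for N
      proof -
        have "N \<inter> \<Union>M = (\<Union>e\<in>M. N \<inter> e)" by blast
        moreover have "card (\<Union>e\<in>M. N \<inter> e) = (\<Sum>e\<in>M. card (N \<inter> e))"
          apply (rule card_UN_disjoint) using M(1) fM unfolding is_matching_def by auto
        ultimately show ?thesis by simp
      qed
      have "card Nu \<ge> s" "card Nv \<ge> s" using deg u v unfolding Nu_def Nv_def by auto
      moreover have "card Nu = card (Nu \<inter> \<Union>M)" "card Nv = card (Nv \<inter> \<Union>M)"
        using NuW NvW by (simp_all add: Int_absorb2)
      ultimately have "(\<Sum>e\<in>M. card (Nu \<inter> e) + card (Nv \<inter> e)) \<ge> 2 * s"
        using sumN[of Nu] sumN[of Nv] by (simp add: sum.distrib)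
      then have big: "(\<Sum>e\<in>M. card (Nu \<inter> e) + card (Nv \<inter> e)) > (\<Sum>e\<in>M. 2)"
        using Suc.prems M(2) by simp
      have "\<exists>e\<in>M. card (Nu \<inter> e) + card (Nv \<inter> e) > 2"
      proof (rule ccontr)
        assume "\<not> ?thesis"
        then have "(\<Sum>e\<in>M. card (Nu \<inter> e) + card (Nv \<inter> e)) \<le> (\<Sum>e\<in>M. 2)"
          by (intro sum_mono) auto
        with big show False by simp
      qed
      then obtain e where e: "e \<in> M" "card (Nu \<inter> e) + card (Nv \<inter> e) > 2" by blast
      have "\<forall>e\<in>M. \<exists>a b. e = {a, b} \<and> a \<noteq> b \<and> a \<in> X \<and> b \<in> X \<and> E a b"
        using M(1) unfolding is_matching_def by simp
      then obtain a b where ab: "e = {a, b}" "a \<noteq> b" "a \<in> X" "b \<in> X"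
        using e(1) by blast
      have cnt: "(if E u a then 1 else 0) + (if E u b then 1 else 0)
          + (if E v a then 1 else 0) + (if E v b then 1 else (0::nat)) > 2"
        using e(2) unfolding ab(1) Nu_def Nv_def card_nbr2[OF ab(2-4)] by simp
      have ee: "{b, a} \<in> M" using e ab by (simp add: insert_commute)
      have "(E u b \<and> E v a) \<or> (E u a \<and> E v b)"
        using cnt by (auto split: if_splits)
      then obtain M' where "is_matching E X M'" "card M' = Suc (card M)"
      proof
        assume "E u b \<and> E v a"
        then show ?thesis using matching_swap[OF M(1) e(1)[unfolded ab(1)] ab(2) u v(1) v(2)[symmetric]] that by blast
      next
        assume "E u a \<and> E v b"
        then show ?thesis using matching_swap[OF M(1) ee ab(2)[symmetric] u v(1) v(2)[symmetric]] that by blast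
      qed
      then show ?thesis using M(2) by auto
    qed
  qed
  then show ?thesis by simp
qed

locale gsetup =
  fixes V :: "'a set" and E :: "'a \<Rightarrow> 'a \<Rightarrow> bool" and k :: nat and \<delta> :: real
  assumes G: "is_graph V E" and k3: "3 \<le> k"
    and deg: "\<forall>v\<in>V. \<delta> \<le> real (degree V E v)"
    and dbig: "\<delta> > real (k - 1) * real (card V) / real k"
begin

definition D :: real where "D = real (card V) - \<delta>"

lemma finV: "finite V" using G unfolding is_graph_def by auto
lemma symE: "E x y \<Longrightarrow> E y x" using G unfolding is_graph_def by auto
lemma irrE: "\<not> E x x" using G unfolding is_graph_def by auto
lemma EV: "E x y \<Longrightarrow> x \<in> V \<and> y \<in> V" using G unfolding is_graph_def by auto

lemma NN_le: "v \<in> V \<Longrightarrow> real (card (NN V E v)) \<le> D"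
  using card_NN[OF finV, of E v] deg unfolding D_def
  by (metis add_diff_cancel_right' diff_left_mono of_nat_add)

lemma self_NN: "v \<in> V \<Longrightarrow> v \<in> NN V E v"
  using irrE unfolding NN_def by auto

lemma D_ge1: "v \<in> V \<Longrightarrow> 1 \<le> D"
proof -
  assume v: "v \<in> V"
  have "finite (NN V E v)" using finV unfolding NN_def by auto
  then have "card (NN V E v) \<ge> 1" using self_NN[OF v] by (metis One_nat_def card_0_eq empty_iff less_one not_le)
  then show ?thesis using NN_le[OF v] by linarith
qed

lemma kD: "real k * D < real (card V)"
proof -
  have kpos: "real k > 0" using k3 by simp
  have "real (k - 1) = real k - 1" using k3 by simp
  then have "\<delta> * real k > (real k - 1) * real (card V)"
    using dbig kpos by (simp add: pos_divide_less_eq)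
  then show ?thesis unfolding D_def by (simp add: algebra_simps)
qed

lemma ext_V:
  assumes "S \<subseteq> V" "S \<noteq> {}" "card S \<le> k"
  shows "\<exists>w\<in>V. w \<notin> S \<and> (\<forall>v\<in>S. E v w \<and> E w v)"
proof -
  have fS: "finite S" using assms(1) finV finite_subset by auto
  obtain v0 where "v0 \<in> S" using assms(2) by auto
  then have D1: "1 \<le> D" using D_ge1 assms(1) by auto
  have "real (\<Sum>v\<in>S. card (V \<inter> NN V E v)) = (\<Sum>v\<in>S. real (card (V \<inter> NN V E v)))" by simp
  also have "\<dots> \<le> (\<Sum>v\<in>S. D)"
  proof (rule sum_mono)
    fix v assume "v \<in> S"
    then have "V \<inter> NN V E v = NN V E v" unfolding NN_def by auto
    then show "real (card (V \<inter> NN V E v)) \<le> D" using NN_le \<open>v \<in> S\<close> assms(1) by auto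
  qed
  also have "\<dots> = real (card S) * D" by simp
  also have "\<dots> \<le> real k * D" using assms(3) D1 by (simp add: mult_right_mono)
  also have "\<dots> < real (card V)" by (rule kD)
  finally have "(\<Sum>v\<in>S. card (V \<inter> NN V E v)) < card V" by linarith
  from count_ext[OF fS subset_refl _ this] irrE obtain w where "w \<in> V" "w \<notin> S" "\<forall>v\<in>S. E v w" by blast
  then show ?thesis using symE by blast
qed

lemma clique_extend:
  assumes "S0 \<subseteq> V" "S0 \<noteq> {}" "is_clique E S0" "card S0 \<le> m" "m \<le> Suc k"
  shows "\<exists>S. S0 \<subseteq> S \<and> S \<subseteq> V \<and> is_clique E S \<and> card S = m"
proof (rule grow[OF finV assms(1,3,4)])
  fix S assume S: "S \<subseteq> V" "is_clique E S" "S0 \<subseteq> S" "card S < m"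
  have "S \<noteq> {}" using S(3) assms(2) by blast
  moreover have "card S \<le> k" using S(4) assms(5) by linarith
  ultimately show "\<exists>w\<in>V. w \<notin> S \<and> (\<forall>v\<in>S. E v w \<and> E w v)"
    using ext_V[OF S(1)] by blast
qed

abbreviation "K \<equiv> kcliques V E k"
abbreviation "R \<equiv> kconn V E k"
abbreviation "CS \<equiv> kcomponents V E k"

lemma equivK: "equiv K R"
proof (rule equivI)
  show "R \<subseteq> K \<times> K" unfolding kconn_def by auto
  show "refl_on K R" unfolding refl_on_def kconn_def by auto
  have "sym (walk_step V E k)" unfolding sym_def walk_step_def by auto
  then have "sym ((walk_step V E k)\<^sup>*)" by (rule sym_rtrancl)
  then show "sym R" unfolding kconn_def sym_def by auto
  show "trans R" unfolding kconn_def trans_def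
    by (auto intro: rtrancl_trans)
qed

lemma finCS: "finite CS"
proof -
  have "K \<subseteq> Pow V" unfolding kcliques_def by auto
  then have "finite K" using finV finite_subset by blast
  moreover have "CS \<subseteq> Pow K" unfolding kcomponents_def using in_quotient_imp_subset[OF equivK] by auto
  ultimately show ?thesis using finite_subset by blast
qed

lemma comp_of:
  assumes "Q \<in> K" shows "R``{Q} \<in> CS \<and> Q \<in> R``{Q}"
proof -
  have "R``{Q} \<in> K // R" by (rule quotientI[OF assms])
  moreover have "Q \<in> R``{Q}" by (rule equiv_class_self[OF equivK assms])
  ultimately show ?thesis unfolding kcomponents_def by simp
qed

lemma walkT:
  assumes "T \<in> kcliques V E (Suc k)" "A \<subseteq> T" "B \<subseteq> T" "card A = k" "card B = k"
  shows "A \<in> K \<and> (A, B) \<in> R"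
proof -
  have TV: "T \<subseteq> V" and clT: "\<forall>x\<in>T. \<forall>y\<in>T. x \<noteq> y \<longrightarrow> E x y"
    using assms(1) unfolding kcliques_def is_clique_def by auto
  have "A \<in> K" unfolding kcliques_def is_clique_def using assms(2,4) TV clT by blast
  moreover have "B \<in> K" unfolding kcliques_def is_clique_def using assms(3,5) TV clT by blast
  ultimately have "A \<in> K" "B \<in> K" by auto
  then have "(A, B) \<in> walk_step V E k" using assms unfolding walk_step_def by auto
  then show ?thesis unfolding kconn_def using \<open>A \<in> K\<close> \<open>B \<in> K\<close> by auto
qed

lemma in_ext_clique:
  assumes "C \<in> CS" "v \<in> ext V E k C" "Q \<in> K" "v \<in> Q"
  shows "Q \<in> C"
proof -
  have c: "R``{Q} \<in> CS" "Q \<in> R``{Q}" using comp_of[OF assms(3)] by auto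
  then have "v \<in> comp_verts (R``{Q})" using assms(4) unfolding comp_verts_def by auto
  then have "R``{Q} = C" using assms(2) c(1) unfolding ext_def by auto
  then show ?thesis using c(2) by simp
qed

lemma sub_T_comp:
  assumes "C \<in> CS" "T \<in> kcliques V E (Suc k)" "x \<in> T" "x \<in> ext V E k C" "A \<subseteq> T" "card A = k"
  shows "A \<in> C"
proof -
  have fT: "finite T" "card T = Suc k" using assms(2) finV unfolding kcliques_def
    by (auto intro: finite_subset)
  obtain w where w: "w \<in> T" "w \<noteq> x"
  proof -
    have "card (T - {x}) = k" using fT assms(3) by simp
    have "T - {x} \<noteq> {}"
    proof
      assume h: "T - {x} = {}"
      have "card (T - {x}) = 0" unfolding h by (rule card.empty)
      then show False using \<open>card (T - {x}) = k\<close> k3 by linarith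
    qed
    then show ?thesis using that by blast
  qed
  define A' where "A' = T - {w}"
  have cA': "card A' = k" unfolding A'_def using fT w(1) by simp
  have "A' \<subseteq> T" unfolding A'_def by auto
  have AA': "A \<in> K" "(A, A') \<in> R" using walkT[OF assms(2,5) \<open>A' \<subseteq> T\<close> assms(6) cA'] by auto
  have "A' \<in> K" using AA'(2) unfolding kconn_def by auto
  then have "A' \<in> C" using in_ext_clique[OF assms(1,4)] w unfolding A'_def using assms(3) by auto
  have c: "R``{A} \<in> CS" "A \<in> R``{A}" using comp_of[OF AA'(1)] by auto
  have "R``{A} = C" using quotient_eq_iff[OF equivK c(1)[unfolded kcomponents_def] assms(1)[unfolded kcomponents_def] c(2) \<open>A' \<in> C\<close>] AA'(2) by simp
  then show ?thesis using c(2) by simp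
qed

lemma nonadj_ext:
  assumes "C \<in> CS" "C' \<in> CS" "C \<noteq> C'" "x \<in> ext V E k C" "y \<in> ext V E k C'"
  shows "\<not> E x y"
proof
  assume xy: "E x y"
  have xyV: "x \<in> V" "y \<in> V" using EV[OF xy] by auto
  have "x \<noteq> y" using xy irrE by auto
  have "is_clique E {x, y}" using xy symE unfolding is_clique_def by auto
  moreover have "card {x, y} \<le> Suc k" using \<open>x \<noteq> y\<close> k3 by simp
  ultimately obtain T where T: "{x, y} \<subseteq> T" "T \<subseteq> V" "is_clique E T" "card T = Suc k"
    using clique_extend[of "{x, y}" "Suc k"] xyV by auto
  have TK: "T \<in> kcliques V E (Suc k)" using T unfolding kcliques_def by auto
  have fT: "finite T" using T(2) finV finite_subset by auto
  have c1: "card (T - {y}) = k" "card (T - {x}) = k" using T(1,4) fT by auto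
  have "T - {y} \<in> C" using sub_T_comp[OF assms(1) TK _ assms(4) _ c1(1)] T(1) \<open>x \<noteq> y\<close> by auto
  moreover have "T - {x} \<in> C'" using sub_T_comp[OF assms(2) TK _ assms(5) _ c1(2)] T(1) \<open>x \<noteq> y\<close> by auto
  moreover have "(T - {y}, T - {x}) \<in> R" using walkT[OF TK _ _ c1] by auto
  ultimately have "C = C'" using quotient_eq_iff[OF equivK assms(1,2)[unfolded kcomponents_def]] by blast
  then show False using assms(3) by simp
qed

lemma notint_ext:
  assumes "v \<in> V" "v \<notin> int_k V E k" "C \<in> CS" "v \<in> comp_verts C"
  shows "v \<in> ext V E k C"
proof -
  let ?S = "{C \<in> CS. v \<in> comp_verts C}"
  have "finite ?S" using finCS by auto
  moreover have "card ?S \<le> Suc 0" using assms(1,2) unfolding int_k_def by auto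
  ultimately have "\<forall>a1\<in>?S. \<forall>a2\<in>?S. a1 = a2" using card_le_Suc0_iff_eq by blast
  then show ?thesis using assms(3,4) unfolding ext_def by auto
qed

lemma ext_notint:
  assumes "C \<in> CS" "v \<in> ext V E k C"
  shows "v \<notin> int_k V E k"
proof -
  have "{C' \<in> CS. v \<in> comp_verts C'} \<subseteq> {C}" using assms(2) unfolding ext_def by auto
  then have "card {C' \<in> CS. v \<in> comp_verts C'} \<le> card {C}" by (intro card_mono) auto
  then have "card {C' \<in> CS. v \<in> comp_verts C'} \<le> 1" by simp
  then show ?thesis unfolding int_k_def by auto
qed

lemma ext_V_sub:
  assumes C: "C \<in> CS" shows "ext V E k C \<subseteq> V"
proof
  fix v assume "v \<in> ext V E k C"
  then have "v \<in> \<Union>C" unfolding ext_def comp_verts_def by simp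
  then obtain Q where Q: "Q \<in> C" "v \<in> Q" by blast
  have "C \<subseteq> K" using in_quotient_imp_subset[OF equivK C[unfolded kcomponents_def]] .
  then have "Q \<subseteq> V" using Q(1) unfolding kcliques_def by blast
  then show "v \<in> V" using Q(2) by blast
qed

lemma cover: "v \<in> V \<Longrightarrow> v \<in> int_k V E k \<or> (\<exists>C\<in>CS. v \<in> ext V E k C)"
proof -
  assume v: "v \<in> V"
  have "is_clique E {v}" unfolding is_clique_def by auto
  then obtain Q where Q: "{v} \<subseteq> Q" "Q \<subseteq> V" "is_clique E Q" "card Q = k"
    using clique_extend[of "{v}" k] v k3 by auto
  then have "Q \<in> K" unfolding kcliques_def by auto
  then have c: "R``{Q} \<in> CS" "Q \<in> R``{Q}" using comp_of by auto
  then have "v \<in> comp_verts (R``{Q})" using Q(1) unfolding comp_verts_def by auto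
  show ?thesis
  proof (cases "v \<in> int_k V E k")
    case True then show ?thesis by simp
  next
    case False
    have "v \<in> ext V E k (R``{Q})" by (rule notint_ext[OF v False c(1) \<open>v \<in> comp_verts (R``{Q})\<close>])
    then show ?thesis using c(1) by blast
  qed
qed

end

theorem lemma6p6:
  fixes V :: "'a set" and E :: "'a \<Rightarrow> 'a \<Rightarrow> bool" and k n :: nat and \<delta> :: real
    and C1 :: "'a set set"
  assumes "is_graph V E"
    and "3 \<le> k"
    and "n = card V"
    and "\<forall>v\<in>V. \<delta> \<le> real (degree V E v)"
    and "\<delta> > real (k - 1) * real n / real k"
    and "2 \<le> card (kcomponents V E k)"
    and "\<not> (\<exists>S \<subseteq> int_k V E k. card S = k \<and> is_clique E S)"
    and "C1 \<in> kcomponents V E k"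
  shows "real (CKF V E k) \<ge> real (k + 1) *
     min (real k * \<delta> - real (k - 1) * real n)
       (min (real_of_int \<lfloor>real (card (ext V E k C1)) / 2\<rfloor>)
            (real k * \<delta> - real (k - 1) * real n
              + real (\<Sum>C\<in>kcomponents V E k - {C1}. card (ext V E k C))
              - real (card (ext V E k C1))))"
proof -
  interpret gsetup V E k \<delta>
    using assms(1-5) by unfold_locales auto
  note noK = assms(7)
  note hC1 = assms(8)
  define X where "X = ext V E k C1"
  define I where "I = int_k V E k"
  define CO where "CO = CS - {C1}"
  define Z where "Z = (\<Union>C\<in>CO. ext V E k C)"
  define z where "z = (\<Sum>C\<in>CO. card (ext V E k C))"
  define \<beta> where "\<beta> = real k * \<delta> - real (k - 1) * real n"
  define q where "q = \<beta> + real z - real (card X)"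
  define m where "m = min \<beta> (min (real_of_int \<lfloor>real (card X) / 2\<rfloor>) q)"
  have goal: "real (k + 1) * m \<le> real (CKF V E k) \<Longrightarrow> ?thesis"
    unfolding m_def q_def \<beta>_def z_def X_def CO_def by simp
  have \<beta>D: "\<beta> = real n - real k * D"
    unfolding \<beta>_def D_def using k3 assms(3) by (simp add: algebra_simps of_nat_diff)
  have finCO: "finite CO" unfolding CO_def using finCS by simp
  have XV: "X \<subseteq> V" unfolding X_def using ext_V_sub[OF hC1] .
  have IV: "I \<subseteq> V" unfolding I_def int_k_def by auto
  have ZV: "Z \<subseteq> V" unfolding Z_def CO_def using ext_V_sub by blast
  have finX: "finite X" using XV finV finite_subset by blast
  have finI: "finite I" using IV finV finite_subset by blast
  have finZ: "finite Z" using ZV finV finite_subset by blast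
  have XI: "X \<inter> I = {}" unfolding X_def I_def using ext_notint[OF hC1] by blast
  have ZI: "Z \<inter> I = {}" unfolding Z_def I_def CO_def using ext_notint by blast
  have XZ: "X \<inter> Z = {}" unfolding X_def Z_def CO_def ext_def by blast
  have cardZ: "card Z = z"
    unfolding Z_def z_def
  proof (rule card_UN_disjoint[OF finCO])
    show "\<forall>i\<in>CO. finite (ext V E k i)" unfolding CO_def using ext_V_sub finV finite_subset by blast
    show "\<forall>i\<in>CO. \<forall>j\<in>CO. i \<noteq> j \<longrightarrow> ext V E k i \<inter> ext V E k j = {}"
      unfolding ext_def CO_def by blast
  qed
  have VXIZ: "V \<subseteq> X \<union> I \<union> Z"
  proof
    fix v assume "v \<in> V"
    then consider "v \<in> I" | C where "C \<in> CS" "v \<in> ext V E k C" using cover unfolding I_def by blast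
    then show "v \<in> X \<union> I \<union> Z"
    proof cases
      case 1 then show ?thesis by simp
    next
      case 2 then show ?thesis unfolding X_def Z_def CO_def by (cases "C = C1") auto
    qed
  qed
  have n_le: "n \<le> card I + card X + z"
  proof -
    have "n \<le> card (X \<union> I \<union> Z)" using card_mono[OF _ VXIZ] finX finI finZ assms(3) by simp
    also have "\<dots> \<le> card X + card I + card Z" by (meson card_Un_le le_trans add_right_mono)
    finally show ?thesis using cardZ by simp
  qed
  have ext_ne: "ext V E k C \<noteq> {}" if hC: "C \<in> CS" for C
  proof -
    obtain Q where Q: "Q \<in> C" using in_quotient_imp_non_empty[OF equivK hC[unfolded kcomponents_def]] by blast
    then have QK: "Q \<in> K" using in_quotient_imp_subset[OF equivK hC[unfolded kcomponents_def]] by blast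
    then have "\<not> Q \<subseteq> int_k V E k" using noK unfolding kcliques_def by blast
    then obtain v where v: "v \<in> Q" "v \<notin> int_k V E k" by blast
    have "v \<in> V" using QK v unfolding kcliques_def by blast
    moreover have "v \<in> comp_verts C" using Q v unfolding comp_verts_def by blast
    ultimately show ?thesis using notint_ext[OF _ v(2) hC] by blast
  qed
  obtain C2 where C2: "C2 \<in> CS" "C2 \<noteq> C1"
  proof -
    have "\<not> CS \<subseteq> {C1}"
    proof
      assume "CS \<subseteq> {C1}"
      then have "card CS \<le> card {C1}" by (intro card_mono) auto
      then show False using assms(6) by simp
    qed
    then show ?thesis using that by blast
  qed
  obtain z0 where z0: "z0 \<in> ext V E k C2" using ext_ne[OF C2(1)] by blast
  have z0Z: "z0 \<in> Z" unfolding Z_def CO_def using C2 z0 by blast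
  have z0V: "z0 \<in> V" using z0Z ZV by blast
  have XD: "real (card X) + 1 \<le> D"
  proof -
    have "insert z0 X \<subseteq> NN V E z0"
    proof
      fix y assume "y \<in> insert z0 X"
      then consider "y = z0" | "y \<in> X" by blast
      then show "y \<in> NN V E z0"
      proof cases
        case 1 then show ?thesis using self_NN[OF z0V] by simp
      next
        case 2
        have "\<not> E z0 y" using nonadj_ext[OF C2(1) hC1 C2(2) z0] 2 unfolding X_def by blast
        then show ?thesis using 2 XV unfolding NN_def by blast
      qed
    qed
    moreover have "finite (NN V E z0)" unfolding NN_def using finV by simp
    moreover have "z0 \<notin> X" using z0Z XZ by blast
    ultimately have "card (insert z0 X) \<le> card (NN V E z0)" using card_mono by blast
    then have "card X + 1 \<le> card (NN V E z0)" using \<open>z0 \<notin> X\<close> finX by simp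
    then show ?thesis using NN_le[OF z0V] by linarith
  qed
  have Xmiss: "real z + real (card (X \<inter> NN V E x)) + real (card (I \<inter> NN V E x)) \<le> D" if x: "x \<in> X" for x
  proof -
    have xV: "x \<in> V" using x XV by blast
    have "Z \<subseteq> NN V E x"
    proof
      fix y assume y: "y \<in> Z"
      then obtain C where C: "C \<in> CO" "y \<in> ext V E k C" unfolding Z_def by blast
      have "\<not> E x y" using nonadj_ext[OF hC1 _ _ x[unfolded X_def] C(2)] C(1) unfolding CO_def by blast
      then show "y \<in> NN V E x" using y ZV unfolding NN_def by blast
    qed
    then have sub: "Z \<union> (X \<inter> NN V E x) \<union> (I \<inter> NN V E x) \<subseteq> NN V E x" by blast
    have fNN: "finite (NN V E x)" unfolding NN_def using finV by simp
    have "card (Z \<union> (X \<inter> NN V E x) \<union> (I \<inter> NN V E x)) = card Z + card (X \<inter> NN V E x) + card (I \<inter> NN V E x)"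
      using XZ XI ZI finX finI finZ by (simp add: card_Un_disjoint Int_Un_distrib2 Int_commute inf_left_commute Int_assoc disjoint_iff)
    moreover have "card (Z \<union> (X \<inter> NN V E x) \<union> (I \<inter> NN V E x)) \<le> card (NN V E x)"
      using card_mono[OF fNN sub] .
    ultimately show ?thesis using NN_le[OF xV] cardZ by simp
  qed
  have xNN: "x \<in> X \<inter> NN V E x" if "x \<in> X" for x using that XV self_NN by blast
  \<comment> \<open>I is K_k-free, so it is small\<close>
  have Ibound: "real (card I) \<le> real (k - 1) * D"
  proof (rule ccontr)
    assume big: "\<not> ?thesis"
    have "\<exists>S. {} \<subseteq> S \<and> S \<subseteq> I \<and> is_clique E S \<and> card S = k"
    proof (rule grow[OF finI])
      show "{} \<subseteq> I" "is_clique E {}" "card {} \<le> k" by (auto simp: is_clique_def)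
    next
      fix S assume S: "S \<subseteq> I" "is_clique E S" "{} \<subseteq> S" "card S < k"
      have fS: "finite S" using S(1) finI finite_subset by blast
      have "real (\<Sum>v\<in>S. card (I \<inter> NN V E v)) = (\<Sum>v\<in>S. real (card (I \<inter> NN V E v)))" by simp
      also have "\<dots> \<le> (\<Sum>v\<in>S. D)"
      proof (rule sum_mono)
        fix v assume "v \<in> S"
        then have vV: "v \<in> V" using S(1) IV by blast
        have "card (I \<inter> NN V E v) \<le> card (NN V E v)" by (rule card_mono) (auto simp: NN_def finV)
        then show "real (card (I \<inter> NN V E v)) \<le> D" using NN_le[OF vV] by linarith
      qed
      also have "\<dots> = real (card S) * D" by simp
      also have "\<dots> \<le> real (k - 1) * D"
      proof (cases "S = {}")
        case True
        have "1 \<le> D" by (rule D_ge1[OF z0V])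
        then show ?thesis using True by simp
      next
        case False
        then obtain v where "v \<in> S" by blast
        then have "1 \<le> D" using D_ge1 S(1) IV by blast
        moreover have "real (card S) \<le> real (k - 1)" using S(4) by simp
        ultimately show ?thesis by (simp add: mult_right_mono)
      qed
      also have "\<dots> < real (card I)" using big by simp
      finally have cnt: "(\<Sum>v\<in>S. card (I \<inter> NN V E v)) < card I" by linarith
      have irrA: "\<forall>x. \<not> E x x" using irrE by blast
      from count_ext[OF fS IV irrA cnt] obtain w where "w \<in> I" "w \<notin> S" "\<forall>v\<in>S. E v w"
        by blast
      then show "\<exists>w\<in>I. w \<notin> S \<and> (\<forall>v\<in>S. E v w \<and> E w v)" using symE by blast
    qed
    then show False using noK unfolding I_def by blast
  qed
  show ?thesis
  proof (cases "m \<le> 0")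
    case True
    have "real (k + 1) * m \<le> 0" using True by (simp add: mult_nonneg_nonpos)
    also have "0 \<le> real (CKF V E k)" by simp
    finally show ?thesis by (rule goal)
  next
    case False
    then have mpos: "m > 0" by simp
    define s where "s = nat \<lceil>m\<rceil>"
    have s_ge: "real s \<ge> m" unfolding s_def using mpos by linarith
    have s_lt: "real s < m + 1" unfolding s_def using mpos by linarith
    have m_le: "m \<le> \<beta>" "m \<le> real_of_int \<lfloor>real (card X) / 2\<rfloor>" "m \<le> q" unfolding m_def by auto
    have s2: "2 * s \<le> card X"
    proof -
      have "\<lceil>m\<rceil> \<le> \<lfloor>real (card X) / 2\<rfloor>" using m_le(2) by (simp add: ceiling_le_iff)
      then have "real_of_int \<lceil>m\<rceil> \<le> real (card X) / 2" by linarith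
      then show ?thesis unfolding s_def using mpos by linarith
    qed
    have \<beta>X: "\<beta> \<le> real (card X) + real z - D"
      using \<beta>D n_le Ibound k3 by (simp add: algebra_simps of_nat_diff) 
    have degX: "\<forall>x\<in>X. s \<le> card {y \<in> X. E x y}"
    proof
      fix x assume x: "x \<in> X"
      have "{y \<in> X. E x y} = X - (X \<inter> NN V E x)" using XV unfolding NN_def by blast
      then have "card {y \<in> X. E x y} = card X - card (X \<inter> NN V E x)"
        using finX by (simp add: card_Diff_subset)
      moreover have "card (X \<inter> NN V E x) \<le> card X" using finX by (simp add: card_mono)
      ultimately have "real (card {y \<in> X. E x y}) = real (card X) - real (card (X \<inter> NN V E x))" by simp
      then have "real (card {y \<in> X. E x y}) \<ge> real (card X) + real z - D" using Xmiss[OF x] by simp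
      then have "real (card {y \<in> X. E x y}) > real s - 1" using \<beta>X m_le(1) s_lt by linarith
      then show "s \<le> card {y \<in> X. E x y}" by linarith
    qed
    obtain M where M: "is_matching E X M" "card M = s"
      using matching_exists[OF finX degX s2] symE irrE by blast
    have Medge: "\<forall>e\<in>M. \<exists>a b. e = {a, b} \<and> a \<noteq> b \<and> a \<in> X \<and> b \<in> X \<and> E a b"
      and Mdisj: "\<forall>e1\<in>M. \<forall>e2\<in>M. e1 \<noteq> e2 \<longrightarrow> e1 \<inter> e2 = {}" and finM: "finite M"
      using M(1) unfolding is_matching_def by simp_all
    have rD: "real r \<le> D" if "r < s" for r using that s2 XD by linarith
    have rq: "real r < q" if "r < s" for r using that s_lt m_le(3) by linarith
    have qI: "q \<le> real (card I) + 2 * real z - real k * D"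
      unfolding q_def using \<beta>D n_le by simp
    have ph2: "\<exists>F. F \<subseteq> kcliques V E (Suc k) \<and> finite F \<and> card F = r
        \<and> (\<forall>T1\<in>F. \<forall>T2\<in>F. T1 \<noteq> T2 \<longrightarrow> T1 \<inter> T2 = {})
        \<and> (\<forall>T\<in>F. T \<inter> X \<in> M \<and> T \<subseteq> X \<union> I \<and> card (T \<inter> I) = k - 1)" if "r \<le> s" for r
      using that
    proof (induction r)
      case 0
      show ?case by (intro exI[of _ "{}"]) simp
    next
      case (Suc r)
      then have rs: "r < s" by simp
      obtain F where F: "F \<subseteq> kcliques V E (Suc k)" "finite F" "card F = r"
         "\<forall>T1\<in>F. \<forall>T2\<in>F. T1 \<noteq> T2 \<longrightarrow> T1 \<inter> T2 = {}"
         "\<forall>T\<in>F. T \<inter> X \<in> M \<and> T \<subseteq> X \<union> I \<and> card (T \<inter> I) = k - 1"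
        using Suc.IH rs by auto
      have "\<not> M \<subseteq> (\<lambda>T. T \<inter> X) ` F"
      proof
        assume "M \<subseteq> (\<lambda>T. T \<inter> X) ` F"
        then have "card M \<le> card ((\<lambda>T. T \<inter> X) ` F)" using finite_imageI[OF F(2)] by (rule card_mono[rotated])
        also have "\<dots> \<le> card F" using card_image_le[OF F(2)] .
        finally show False using M(2) F(3) rs by simp
      qed
      then obtain e where e: "e \<in> M" "e \<notin> (\<lambda>T. T \<inter> X) ` F" by blast
      obtain x y where xy: "e = {x, y}" "x \<noteq> y" "x \<in> X" "y \<in> X" "E x y" using Medge e(1) by blast
      have xyT: "x \<notin> T \<and> y \<notin> T" if T: "T \<in> F" for T
      proof -
        have h1: "T \<inter> X \<in> M" "T \<inter> X \<noteq> e" using F(5) T e(2) by auto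
        have "(T \<inter> X) \<inter> e = {}" using Mdisj[rule_format, OF h1(1) e(1) h1(2)] .
        then show ?thesis using xy by blast
      qed
      define U where "U = (\<Union>T\<in>F. T \<inter> I)"
      have UI: "U \<subseteq> I" unfolding U_def by blast
      have cardU: "card U = (k - 1) * r"
      proof -
        have "card U = (\<Sum>T\<in>F. card (T \<inter> I))" unfolding U_def
          apply (rule card_UN_disjoint[OF F(2)]) using finI F(4) by auto
        also have "\<dots> = (\<Sum>T\<in>F. k - 1)" using F(5) by simp
        finally show ?thesis using F(3) by simp
      qed
      have TK: "T \<subseteq> V \<and> is_clique E T \<and> card T = Suc k" if "T \<in> F" for T
        using F(1) that unfolding kcliques_def by auto
      have miss: "real (card ((I - U) \<inter> NN V E i)) \<le> D - real r" if i: "i \<in> I - U" for i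
      proof -
        have iV: "i \<in> V" using i IV by blast
        have ne: "T \<inter> I \<inter> NN V E i \<noteq> {}" if T: "T \<in> F" for T
        proof
          assume h: "T \<inter> I \<inter> NN V E i = {}"
          have adj: "\<forall>w\<in>T \<inter> I. E i w" using h TK[OF T] IV unfolding NN_def by blast
          have iT: "i \<notin> T \<inter> I" using i T unfolding U_def by blast
          have fT: "finite (T \<inter> I)" using finI by simp
          have clT: "is_clique E T" using TK[OF T] by blast
          have "is_clique E (insert i (T \<inter> I))"
            unfolding is_clique_def
          proof (intro ballI impI)
            fix a b assume ab: "a \<in> insert i (T \<inter> I)" "b \<in> insert i (T \<inter> I)" "a \<noteq> b"
            show "E a b"
            proof (cases "a = i")
              case True
              then show ?thesis using ab adj by auto
            next
              case False
              then have aT: "a \<in> T \<inter> I" using ab(1) by blast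
              show ?thesis
              proof (cases "b = i")
                case True
                then show ?thesis using aT adj symE by blast
              next
                case False
                then have "b \<in> T \<inter> I" using ab(2) by blast
                then show ?thesis using aT ab(3) clT unfolding is_clique_def by blast
              qed
            qed
          qed
          moreover have "card (insert i (T \<inter> I)) = k" using iT fT F(5) T k3 by simp
          moreover have "insert i (T \<inter> I) \<subseteq> int_k V E k" using i unfolding I_def by blast
          ultimately show False using noK by blast
        qed
        define A where "A = (\<Union>T\<in>F. T \<inter> I \<inter> NN V E i)"
        have cA: "card A = (\<Sum>T\<in>F. card (T \<inter> I \<inter> NN V E i))" unfolding A_def
          apply (rule card_UN_disjoint[OF F(2)]) using finI F(4) by auto
        have "(\<Sum>T\<in>F. (1::nat)) \<le> (\<Sum>T\<in>F. card (T \<inter> I \<inter> NN V E i))"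
        proof (rule sum_mono)
          fix T assume "T \<in> F"
          then have "T \<inter> I \<inter> NN V E i \<noteq> {}" by (rule ne)
          moreover have "finite (T \<inter> I \<inter> NN V E i)" using finI by simp
          ultimately show "1 \<le> card (T \<inter> I \<inter> NN V E i)"
            by (metis One_nat_def Suc_leI card_gt_0_iff)
        qed
        then have rA: "r \<le> card A" using cA F(3) by simp
        have fNN: "finite (NN V E i)" unfolding NN_def using finV by simp
        have sub: "((I - U) \<inter> NN V E i) \<union> A \<subseteq> NN V E i" unfolding A_def by blast
        have dj: "((I - U) \<inter> NN V E i) \<inter> A = {}" unfolding A_def U_def by blast
        have fin1: "finite ((I - U) \<inter> NN V E i)" "finite A" using fNN sub finite_subset by blast+
        have "card ((I - U) \<inter> NN V E i) + card A = card (((I - U) \<inter> NN V E i) \<union> A)"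
          using card_Un_disjoint[OF fin1 dj] by simp
        also have "\<dots> \<le> card (NN V E i)" using card_mono[OF fNN sub] .
        finally show ?thesis using rA NN_le[OF iV] by linarith
      qed
      define P where "P = {w \<in> I - U. E x w \<and> E y w}"
      have PV: "P \<subseteq> V" unfolding P_def using IV by blast
      have finP: "finite P" unfolding P_def using finI by simp
      have x1: "1 \<le> card (X \<inter> NN V E x)" "1 \<le> card (X \<inter> NN V E y)"
        using xNN[OF xy(3)] xNN[OF xy(4)] finX
        by (metis One_nat_def Suc_leI card_gt_0_iff empty_iff finite_Int)+
      have dx: "real (card (I \<inter> NN V E x)) \<le> D - 1 - real z"
        using Xmiss[OF xy(3)] x1(1) by linarith
      have dy: "real (card (I \<inter> NN V E y)) \<le> D - 1 - real z"
        using Xmiss[OF xy(4)] x1(2) by linarith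
      have cardP: "real (card I) - real ((k - 1) * r) - 2 * (D - 1 - real z) \<le> real (card P)"
      proof -
        have "I - U \<subseteq> P \<union> (I \<inter> NN V E x) \<union> (I \<inter> NN V E y)" unfolding P_def NN_def using IV by blast
        then have "card (I - U) \<le> card (P \<union> (I \<inter> NN V E x) \<union> (I \<inter> NN V E y))"
          using finI finP by (intro card_mono) auto
        also have "\<dots> \<le> card P + card (I \<inter> NN V E x) + card (I \<inter> NN V E y)"
          by (meson card_Un_le le_trans add_right_mono)
        finally have a: "card (I - U) \<le> card P + card (I \<inter> NN V E x) + card (I \<inter> NN V E y)" .
        have b: "card (I - U) = card I - card U" using card_Diff_subset[OF finite_subset[OF UI finI] UI] .
        have c: "card U \<le> card I" using card_mono[OF finI UI] .
        have "real (card I) - real (card U) \<le> real (card P) + real (card (I \<inter> NN V E x)) + real (card (I \<inter> NN V E y))"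
          using a b c by (simp add: of_nat_diff)
        then show ?thesis using dx dy cardU by simp
      qed
      have keyineq: "real (k - 2) * (D - real r) < real (card I) - real ((k - 1) * r) - 2 * (D - 1 - real z)"
      proof -
        have e1: "real (k - 2) * (D - real r) = real k * D - real k * real r - 2 * D + 2 * real r"
          using k3 by (simp add: of_nat_diff algebra_simps)
        have e2: "real ((k - 1) * r) = real k * real r - real r"
          using k3 by (simp add: of_nat_diff algebra_simps)
        have "real r < q" by (rule rq[OF rs])
        then show ?thesis unfolding e1 e2 using qI by argo
      qed
      obtain B where B: "B \<subseteq> P" "is_clique E B" "card B = k - 1"
      proof -
        have "\<exists>S. {} \<subseteq> S \<and> S \<subseteq> P \<and> is_clique E S \<and> card S = k - 1"
        proof (rule grow[OF finP])
          show "{} \<subseteq> P" "is_clique E {}" "card {} \<le> k - 1" by (auto simp: is_clique_def)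
        next
          fix S assume S: "S \<subseteq> P" "is_clique E S" "{} \<subseteq> S" "card S < k - 1"
          have fS: "finite S" using S(1) finP finite_subset by blast
          have "real (\<Sum>v\<in>S. card (P \<inter> NN V E v)) = (\<Sum>v\<in>S. real (card (P \<inter> NN V E v)))" by simp
          also have "\<dots> \<le> (\<Sum>v\<in>S. D - real r)"
          proof (rule sum_mono)
            fix v assume v: "v \<in> S"
            then have "v \<in> I - U" using S(1) unfolding P_def by blast
            moreover have "card (P \<inter> NN V E v) \<le> card ((I - U) \<inter> NN V E v)"
              by (rule card_mono) (auto simp: P_def finI)
            ultimately show "real (card (P \<inter> NN V E v)) \<le> D - real r" using miss by fastforce
          qed
          also have "\<dots> = real (card S) * (D - real r)" by simp
          also have "\<dots> \<le> real (k - 2) * (D - real r)"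
            using S(4) rD[OF rs] by (intro mult_right_mono) auto
          also have "\<dots> < real (card I) - real ((k - 1) * r) - 2 * (D - 1 - real z)" by (rule keyineq)
          also have "\<dots> \<le> real (card P)" by (rule cardP)
          finally have cnt: "(\<Sum>v\<in>S. card (P \<inter> NN V E v)) < card P" by linarith
          have irrA: "\<forall>x. \<not> E x x" using irrE by blast
          from count_ext[OF fS PV irrA cnt] obtain w where "w \<in> P" "w \<notin> S" "\<forall>v\<in>S. E v w" by blast
          then show "\<exists>w\<in>P. w \<notin> S \<and> (\<forall>v\<in>S. E v w \<and> E w v)" using symE by blast
        qed
        then show ?thesis using that by blast
      qed
      define T' where "T' = insert x (insert y B)"
      have BI: "B \<subseteq> I - U" "\<forall>w\<in>B. E x w \<and> E y w" using B(1) unfolding P_def by auto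
      have BI2: "\<forall>w\<in>B. E w x \<and> E w y" using BI(2) symE by blast
      have yx: "E y x" using xy(5) symE by blast
      have xyB: "x \<notin> B" "y \<notin> B" using BI(1) xy(3,4) XI by blast+
      have finB: "finite B" using BI(1) finI finite_subset by blast
      have T'K: "T' \<in> kcliques V E (Suc k)"
      proof -
        have "T' \<subseteq> V" unfolding T'_def using XV IV xy BI by blast
        moreover have "is_clique E T'"
          unfolding is_clique_def
        proof (intro ballI impI)
          fix a b assume ab: "a \<in> T'" "b \<in> T'" "a \<noteq> b"
          consider "a = x" | "a = y" | "a \<in> B" using ab(1) unfolding T'_def by blast
          then show "E a b"
          proof cases
            case 1
            then consider "b = y" | "b \<in> B" using ab unfolding T'_def by blast
            then show ?thesis using 1 xy(5) BI(2) by cases auto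
          next
            case 2
            then consider "b = x" | "b \<in> B" using ab unfolding T'_def by blast
            then show ?thesis using 2 yx BI(2) by cases auto
          next
            case 3
            then consider "b = x" | "b = y" | "b \<in> B" using ab unfolding T'_def by blast
            then show ?thesis using 3 BI2 B(2) ab(3) unfolding is_clique_def by cases auto
          qed
        qed
        moreover have "card T' = Suc k" unfolding T'_def using xyB xy(2) finB B(3) k3 by simp
        ultimately show ?thesis unfolding kcliques_def by blast
      qed
      have T'X: "T' \<inter> X = e" unfolding T'_def xy(1) using BI(1) XI xy(3,4) by blast
      have T'I: "T' \<inter> I = B" unfolding T'_def using BI(1) XI xy(3,4) by blast
      have T'XI: "T' \<subseteq> X \<union> I" unfolding T'_def using BI(1) xy(3,4) by blast
      have T'notin: "T' \<notin> F" using T'X e(2) by force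
      have disjT': "T' \<inter> T = {}" if "T \<in> F" for T
      proof -
        have "T \<subseteq> X \<union> I" using F(5) that by blast
        moreover have "x \<notin> T" "y \<notin> T" using xyT[OF that] by auto
        moreover have "B \<inter> T = {}" using BI(1) that unfolding U_def by blast
        ultimately show ?thesis unfolding T'_def by blast
      qed
      show ?case
      proof (intro exI[of _ "insert T' F"] conjI)
        show "insert T' F \<subseteq> kcliques V E (Suc k)" using F(1) T'K by blast
        show "finite (insert T' F)" using F(2) by simp
        show "card (insert T' F) = Suc r" using F(2,3) T'notin by simp
        show "\<forall>T1\<in>insert T' F. \<forall>T2\<in>insert T' F. T1 \<noteq> T2 \<longrightarrow> T1 \<inter> T2 = {}"
        proof (intro ballI impI)
          fix T1 T2 assume T: "T1 \<in> insert T' F" "T2 \<in> insert T' F" "T1 \<noteq> T2"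
          show "T1 \<inter> T2 = {}"
          proof (cases "T1 = T'")
            case True
            then have "T2 \<in> F" using T by blast
            then show ?thesis using True disjT' by blast
          next
            case False
            then have T1F: "T1 \<in> F" using T by blast
            show ?thesis
            proof (cases "T2 = T'")
              case True
              then show ?thesis using disjT'[OF T1F] by blast
            next
              case False
              then have "T2 \<in> F" using T(2) by blast
              then show ?thesis using F(4)[rule_format, OF T1F _ T(3)] by blast
            qed
          qed
        qed
        show "\<forall>T\<in>insert T' F. T \<inter> X \<in> M \<and> T \<subseteq> X \<union> I \<and> card (T \<inter> I) = k - 1"
          using F(5) T'X T'I T'XI e(1) B(3) by auto
      qed
    qed
    obtain F where F: "F \<subseteq> kcliques V E (Suc k)" "finite F" "card F = s"
         "\<forall>T1\<in>F. \<forall>T2\<in>F. T1 \<noteq> T2 \<longrightarrow> T1 \<inter> T2 = {}"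
         "\<forall>T\<in>F. T \<inter> X \<in> M \<and> T \<subseteq> X \<union> I \<and> card (T \<inter> I) = k - 1"
      using ph2[of s] by auto
    have inC1: "A' \<in> C1" if hA': "\<exists>T\<in>F. A' \<subseteq> T \<and> card A' = k" for A'
    proof -
      obtain T where T: "T \<in> F" "A' \<subseteq> T" "card A' = k" using hA' by blast
      have "T \<inter> X \<in> M" using F(5) T(1) by blast
      from Medge[rule_format, OF this] obtain a b where ab: "T \<inter> X = {a, b}" by blast
      then have a: "a \<in> T" "a \<in> X" by auto
      have TK: "T \<in> kcliques V E (Suc k)" using F(1) T(1) by blast
      show ?thesis using sub_T_comp[OF hC1 TK a(1) _ T(2,3)] a(2) unfolding X_def by blast
    qed
    have conn: "is_connected_factor V E k F"
      unfolding is_connected_factor_def is_factor_def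
    proof (intro conjI allI impI)
      show "F \<subseteq> kcliques V E (Suc k)" by (rule F(1))
      show "\<forall>T1\<in>F. \<forall>T2\<in>F. T1 \<noteq> T2 \<longrightarrow> T1 \<inter> T2 = {}" by (rule F(4))
    next
      fix A B assume hA: "\<exists>T\<in>F. A \<subseteq> T \<and> card A = k" and hB: "\<exists>T\<in>F. B \<subseteq> T \<and> card B = k"
      have "A \<in> C1" "B \<in> C1" using inC1 hA hB by auto
      then show "(A, B) \<in> kconn V E k"
        using quotient_eq_iff[OF equivK hC1[unfolded kcomponents_def] hC1[unfolded kcomponents_def]] by blast
    qed
    have cU: "card (\<Union>F) = Suc k * s"
    proof -
      have finT: "finite T" if "T \<in> F" for T
      proof -
        have "T \<subseteq> V" using F(1) that unfolding kcliques_def by blast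
        then show ?thesis using finV finite_subset by blast
      qed
      have "pairwise disjnt F" unfolding pairwise_def disjnt_def using F(4) by blast
      then have "card (\<Union>F) = sum card F" using card_Union_disjoint finT by blast
      also have "\<dots> = (\<Sum>T\<in>F. Suc k)" using F(1) unfolding kcliques_def by (intro sum.cong) auto
      finally show ?thesis using F(3) by simp
    qed
    have finS: "finite {card (\<Union>F) | F. is_connected_factor V E k F}"
    proof (rule finite_subset[of _ "{..card V}"])
      show "{card (\<Union>F) | F. is_connected_factor V E k F} \<subseteq> {..card V}"
      proof
        fix c assume "c \<in> {card (\<Union>F) | F. is_connected_factor V E k F}"
        then obtain F' where F': "c = card (\<Union>F')" "is_connected_factor V E k F'" by blast
        then have "\<Union>F' \<subseteq> V" unfolding is_connected_factor_def is_factor_def kcliques_def by blast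
        then show "c \<in> {..card V}" using F'(1) card_mono[OF finV] by auto
      qed
    qed simp
    have "card (\<Union>F) \<le> CKF V E k"
      unfolding CKF_def by (rule Max_ge[OF finS]) (use conn in blast)
    then have h: "Suc k * s \<le> CKF V E k" using cU by simp
    have "real (Suc k * s) \<le> real (CKF V E k)" using h by (simp only: of_nat_le_iff)
    moreover have "real (k + 1) * m \<le> real (k + 1) * real s"
      using s_ge by (intro mult_left_mono) auto
    moreover have "real (Suc k * s) = real (k + 1) * real s" by (simp add: algebra_simps)
    ultimately have "real (k + 1) * m \<le> real (CKF V E k)" by linarith
    then show ?thesis by (rule goal)
  qed
qed

end
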